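(* In the setting described in the context, assume $n$ is even and $N<\infty$, and put $r=\frac N2$. Then $n=2k$ with $k\in\{1,\dots,r-1\}$, $r\ge2$, $$\frac14\le\sigma_0^2=\frac{k(r-k)}{2r}\le\frac r8,\qquad \sigma=\sqrt{\frac{2r}{2r-1}}\,\sigma_0,$$ and $$f(k)>\frac1{\sigma_0\sqrt{2\pi}}\exp\Big(\frac{23}{192r}-\frac1{16\sigma_0^2}\Big)>\frac1{\sigma_0\sqrt{2\pi}}\exp\Big(-\frac1{16\sigma_0^2}\Big),$$ $$f(k)<\frac1{\sigma_0\sqrt{2\pi}}\exp\Big(\frac1{8r}-\frac{23}{384\sigma_0^2}\Big)<\frac1{\sigma_0\sqrt{2\pi}}e^{-\frac1{24\sigma_0^2}}<\frac1{\sigma\sqrt{2\pi}}.$$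
   Context: Standing setting: Binomial law $\mathrm B_{m,p}(\{k\})=\binom mk p^k(1-p)^{m-k}$; hypergeometric law $\mathrm H_{m,r,b}(\{k\})=\binom rk\binom b{m-k}/\binom{r+b}m$ ($r,b\in\mathbb N_0$, $m\in\{0,\dots,r+b\}$, $k\in\mathbb Z$, binomial coefficients with non-integer lower index being $0$). $P$ is a symmetric (about its mean) hypergeometric or symmetric binomial law with mean $\frac n2$ and standard deviation $\sigma>0$, and $f(k)=P(\{k\})$; $N\in\mathbb N\cup\{\infty\}$ is a population size parameter of $P$ (i.e. $N=\infty$ and $P$ binomial, or $P=\mathrm H_{m,r,b}$ for some $r,b,m$ with $r+b=N$); $\sigma_0^2=\frac{N-1}N\sigma^2$ if $N<\infty$, $\sigma_0^2=\sigma^2$ if $N=\infty$, $\sigma_0\ge 0$. *)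

theory Defs
  imports Complex_Main
begin

definition zbinom :: "nat \<Rightarrow> int \<Rightarrow> real" where
  "zbinom a k = (if k < 0 then 0 else real (a choose nat k))"

text \<open>Probability mass function of the hypergeometric law H_{m,r,b} at the integer k
  (meaningful for m \<le> r + b).\<close>
definition hyp_pmf :: "nat \<Rightarrow> nat \<Rightarrow> nat \<Rightarrow> int \<Rightarrow> real" where
  "hyp_pmf m r b k = zbinom r k * zbinom b (int m - k) / real ((r + b) choose m)"

text \<open>Mean and variance of H_{m,r,b}; the support is contained in {0..m}.\<close>
definition hyp_mean :: "nat \<Rightarrow> nat \<Rightarrow> nat \<Rightarrow> real" where
  "hyp_mean m r b = (\<Sum>k\<in>{0..int m}. real_of_int k * hyp_pmf m r b k)"

definition hyp_var :: "nat \<Rightarrow> nat \<Rightarrow> nat \<Rightarrow> real" where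
  "hyp_var m r b = (\<Sum>k\<in>{0..int m}. (real_of_int k - hyp_mean m r b)^2 * hyp_pmf m r b k)"

end

theory Submission
  imports Defs "HOL-Analysis.Analysis"
begin

declare binomial_Suc_Suc[simp del]

definition cb :: "nat \<Rightarrow> real" where "cb j = real ((2*j) choose j) / 4^j"

lemma aux_nat3: "(a::nat)*y = x*t \<Longrightarrow> t*y = b*z \<Longrightarrow> x*t^2 = z*b*a"
  by (metis (no_types, lifting) mult.assoc mult.commute power2_eq_square)

lemma choose_central_Suc: "(2*Suc j choose Suc j) * (Suc j)^2 = (2*j choose j) * (2*j+1) * (2*j+2)"
proof -
  have e1: "Suc (2*j+1) * ((2*j+1) choose j) = (2*Suc j choose Suc j) * Suc j"
    using Suc_times_binomial_eq[of "2*j+1" j] by simp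
  have e2: "Suc j * (Suc (2*j) choose Suc j) = Suc (2*j) * ((2*j) choose j)"
    using Suc_times_binomial[of j "2*j"] .
  have e3: "((2*j+1) choose j) = (Suc (2*j) choose Suc j)"
    using binomial_symmetric[of j "2*j+1"] by simp
  have e1': "(2*j+2) * (Suc (2*j) choose Suc j) = (2*Suc j choose Suc j) * Suc j"
    using e1 e3 by simp
  have e2': "Suc j * (Suc (2*j) choose Suc j) = (2*j+1) * ((2*j) choose j)"
    using e2 by simp
  show ?thesis using aux_nat3[OF e1' e2'] by simp
qed

lemma aux_real_cb: "(X::real) * (j+1)^2 = Z*(2*j+1)*(2*j+2) \<Longrightarrow> j \<ge> 0 \<Longrightarrow>
   X / (4*4^i) = Z / 4^i * (2*j+1)/(2*j+2)"
proof -
  assume h: "X * (j+1)^2 = Z*(2*j+1)*(2*j+2)" "j \<ge> 0"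
  have "X * (j+1)^2 = (Z*(2*j+1)*2) * (j+1)" using h by (simp add: algebra_simps)
  hence "X * (j+1) = Z*(2*j+1)*2" using h(2) by (simp add: power2_eq_square)
  hence hX: "X = Z*(2*j+1)*2/(j+1)" using h(2) by (simp add: field_simps)
  have "(4::real)^i > 0" by simp
  show ?thesis unfolding hX using h(2) \<open>(4::real)^i > 0\<close> by simp
qed

lemma g0: "(P::real)\<noteq>0 \<Longrightarrow> u\<noteq>0 \<Longrightarrow> q\<noteq>0 \<Longrightarrow> c^2*u^2/P*q*(w*P/(u*q)) = c^2*u*w"
  by (simp add: field_simps power2_eq_square)
lemma g1: assumes "(a::real) \<ge> 0" shows "(c*(2*a+1)/(2*a+2))^2*(2*a+3)*(w*(4*(a+1)^2)/((2*a+1)*(2*a+3))) = c^2*(2*a+1)*w"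
proof -
  have e: "(2*a+2)^2 = 4*(a+1)^2" by (simp add: power2_eq_square algebra_simps)
  have "(c*(2*a+1)/(2*a+2))^2 = c^2*(2*a+1)^2/(4*(a+1)^2)" by (simp add: power_divide power_mult_distrib e)
  moreover have "4*(a+1)^2 \<noteq> 0" "2*a+1 \<noteq> 0" "2*a+3 \<noteq> 0" using assms by auto
  ultimately show ?thesis using g0 by simp
qed

lemma cb_Suc: "cb (Suc j) = cb j * (2*real j+1)/(2*real j+2)"
proof -
  have "real ((2*Suc j choose Suc j) * (Suc j)^2) = real ((2*j choose j) * (2*j+1) * (2*j+2))"
    using choose_central_Suc[of j] by (simp only:)
  hence "real (2*Suc j choose Suc j) * (real j + 1)^2 = real (2*j choose j) * (2*real j+1) * (2*real j+2)"
    by (simp only: of_nat_mult of_nat_power of_nat_add of_nat_Suc of_nat_numeral of_nat_1) (simp add: algebra_simps)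
  from aux_real_cb[OF this, of j]
  show ?thesis unfolding cb_def by simp
qed

definition W :: "nat \<Rightarrow> real" where "W n = (\<Prod>k=1..n. (4*real k^2) / (4*real k^2 - 1))"

lemma W_Suc: "W (Suc n) = W n * (4*(real n+1)^2)/(4*(real n+1)^2 - 1)"
  unfolding W_def by (simp add: prod.nat_ivl_Suc' add.commute)

lemma W_pos: "W n > 0"
  unfolding W_def
proof (intro prod_pos ballI)
  fix k assume "k \<in> {1..n}"
  hence "real k \<ge> 1" by auto
  hence "4*real k^2 - 1 > 0" using one_le_power[OF \<open>real k \<ge> 1\<close>, of 2] by linarith
  thus "0 < 4 * real k ^ 2 / (4 * real k ^ 2 - 1)" using \<open>real k \<ge> 1\<close> by simp
qed

lemma cb_W: "cb n ^2 * (2*real n+1) * W n = 1"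
proof (induction n)
  case 0 thus ?case by (simp add: cb_def W_def)
next
  case (Suc n)
  have h: "4*(real n+1)^2 - 1 = (2*real n+1)*(2*real n+3)" by (simp add: algebra_simps power2_eq_square)
  have h2: "2*real (Suc n)+1 = 2*real n+3" by simp
  have "cb (Suc n) ^2 * (2*real (Suc n)+1) * W (Suc n)
     = (cb n * (2*real n+1)/(2*real n+2))^2 * (2*real n+3) * (W n * (4*(real n+1)^2)/((2*real n+1)*(2*real n+3)))"
    by (simp only: cb_Suc W_Suc h h2 times_divide_eq_right)
  also have "\<dots> = cb n ^2 * (2*real n+1) * W n"
    using g1[of "real n" "cb n" "W n"] by simp
  finally show ?case using Suc by simp
qed

definition AA :: "nat \<Rightarrow> real" where "AA j = pi * j * (cb j)^2"

lemma AA_eq: "AA n = pi * n / ((2*real n+1) * W n)"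
proof -
  have "(2*real n+1) * W n \<noteq> 0" using W_pos[of n] by (simp add: add_nonneg_eq_0_iff)
  hence "cb n ^2 = 1 / ((2*real n+1) * W n)" using cb_W[of n]
    by (simp add: eq_divide_eq mult_ac)
  thus ?thesis unfolding AA_def by simp
qed

lemma AA_lim: "AA \<longlonglongrightarrow> 1"
proof -
  have l1: "(\<lambda>n. real n / (2*n+1)) \<longlonglongrightarrow> 1/2"
  proof -
    have "(\<lambda>n. 1 / (2 + inverse (real (Suc n)))) \<longlonglongrightarrow> 1/(2::real)"
      by (intro tendsto_intros LIMSEQ_inverse_real_of_nat_add[of 2]) auto
    hence "(\<lambda>n. real (Suc n) / (2*Suc n+1)) \<longlonglongrightarrow> 1/2"
    proof (rule Lim_transform_eventually)
      show "\<forall>\<^sub>F n in sequentially. 1 / (2 + inverse (real (Suc n))) = real (Suc n) / (2 * Suc n + 1)"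
        by (intro always_eventually allI) (simp add: field_simps)
    qed
    thus ?thesis by (subst (asm) filterlim_sequentially_Suc)
  qed
  have "(\<lambda>n. pi * (real n / (2*n+1)) / W n) \<longlonglongrightarrow> pi * (1/2) / (pi/2)"
    using wallis unfolding W_def[symmetric] by (intro tendsto_intros l1) auto
  moreover have "(\<lambda>n. pi * (real n / (2*n+1)) / W n) = AA"
    by (rule ext) (simp add: AA_eq)
  ultimately show ?thesis by simp
qed

lemma ln_lower: assumes "(x::real) \<ge> 0" shows "x - x^2/2 \<le> ln (1+x)"
proof -
  let ?h = "\<lambda>y::real. ln(1+y) - y + y^2/2"
  have "?h 0 \<le> ?h x"
  proof (rule DERIV_nonneg_imp_nondecreasing[OF assms])
    fix y :: real assume y: "0 \<le> y" "y \<le> x"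
    have "(?h has_real_derivative (1/(1+y) - 1 + 2*y/2)) (at y)"
      using y by (auto intro!: derivative_eq_intros)
    moreover have "1/(1+y) - 1 + 2*y/2 \<ge> 0"
    proof -
      have "1/(1+y) - 1 + y = y^2/(1+y)" using y by (simp add: field_simps power2_eq_square)
      thus ?thesis using y by simp
    qed
    ultimately show "\<exists>d. (?h has_real_derivative d) (at y) \<and> d \<ge> 0" by blast
  qed
  thus ?thesis by simp
qed

lemma AA_Suc: assumes "j \<ge> 1" shows "AA (Suc j) = AA j * (1 + 1/(4*real j*(real j+1)))"
proof -
  have j: "real j \<ge> 1" using assms by simp
  have "AA (Suc j) = pi * (real j+1) * (cb j * (2*real j+1)/(2*real j+2))^2"
    unfolding AA_def cb_Suc by simp
  also have "\<dots> = pi * real j * cb j ^2 * ((real j+1)*(2*real j+1)^2/(real j*(2*real j+2)^2))"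
    using j by (simp add: field_simps) (simp add: power2_eq_square algebra_simps)
  also have "(real j+1)*(2*real j+1)^2/(real j*(2*real j+2)^2) = 1 + 1/(4*real j*(real j+1))"
  proof -
    let ?x = "real j" let ?D = "4*?x*(?x+1)"
    have D: "?D > 0" using j by simp
    have "(?x+1)*(2*?x+1)^2/(?x*(2*?x+2)^2) = ((?D+1)*(?x+1))/(?D*(?x+1))"
      by (simp add: power2_eq_square algebra_simps)
    also have "\<dots> = (?D+1)/?D" using j by simp
    also have "\<dots> = 1 + 1/?D" using D assms by (simp add: add_divide_distrib)
    finally show ?thesis .
  qed
  finally show ?thesis unfolding AA_def by simp
qed

lemma k1: assumes "(j::real) \<ge> 1" shows "2*(1/(8*j) - 1/(192*j^3)) - 2*(1/(8*(j+1)) - 1/(192*(j+1)^3)) \<le> 1/(4*j*(j+1)) - (1/(4*j*(j+1)))^2/2"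
proof -
  have a: "1/(4*j) - 1/(4*(j+1)) = 1/(4*j*(j+1))" using assms by (simp add: field_simps)
  have b: "1/j^3 - 1/(j+1)^3 = (3*j^2+3*j+1)/(j^3*(j+1)^3)" using assms by (simp add: field_simps) (simp add: power3_eq_cube power2_eq_square algebra_simps)
  have c: "(1/(4*j*(j+1)))^2/2 = 1/(32*j^2*(j+1)^2)" by (simp add: power2_eq_square)
  have d: "1/(32*j^2*(j+1)^2) \<le> (3*j^2+3*j+1)/(96*j^3*(j+1)^3)"
  proof -
    have p: "j^2*(j+1)^2 > 0" "j^3*(j+1)^3 > 0" using assms by auto
    have e: "96*j^3*(j+1)^3 = (3*j*(j+1))*(32*j^2*(j+1)^2)" by (simp add: power2_eq_square power3_eq_cube algebra_simps)
    have "3*j*(j+1) \<noteq> 0" using assms by simp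
    hence "(3*j*(j+1))/((3*j*(j+1))*(32*j^2*(j+1)^2)) = 1/(32*j^2*(j+1)^2)" by (rule nonzero_divide_mult_cancel_left)
    hence "1/(32*j^2*(j+1)^2) = (3*j*(j+1))/(96*j^3*(j+1)^3)" unfolding e by simp
    also have "\<dots> \<le> (3*j^2+3*j+1)/(96*j^3*(j+1)^3)" using p by (intro divide_right_mono) (auto simp: power2_eq_square algebra_simps)
    finally show ?thesis .
  qed
  have "2*(1/(8*j) - 1/(192*j^3)) - 2*(1/(8*(j+1)) - 1/(192*(j+1)^3)) = (1/(4*j) - 1/(4*(j+1))) - (1/j^3 - 1/(j+1)^3)/96"
  proof -
    have eqs: "1/(8*j) = (1/j)/8" "1/(4*j) = (1/j)/4" "1/(192*j^3) = (1/j^3)/192"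
      "1/(8*(j+1)) = (1/(j+1))/8" "1/(4*(j+1)) = (1/(j+1))/4" "1/(192*(j+1)^3) = (1/(j+1)^3)/192" by simp_all
    have g: "\<And>a b c d::real. 2*(a/8 - b/192) - 2*(c/8 - d/192) = a/4 - c/4 - (b-d)/96" by (simp add: diff_divide_distrib)
    show ?thesis unfolding eqs by (rule g)
  qed
  also have "\<dots> = 1/(4*j*(j+1)) - (3*j^2+3*j+1)/(96*(j^3*(j+1)^3))" using a b by simp
  finally show ?thesis using c d by (simp add: mult.assoc)
qed

lemma cb_pos: "cb j > 0"
  unfolding cb_def by simp

lemma AA_pos: "j \<ge> 1 \<Longrightarrow> AA j > 0"
  unfolding AA_def using cb_pos[of j] by simp

lemma lim_c_over_Suc: "(\<lambda>n. c / (real n + 1)) \<longlonglongrightarrow> (0::real)"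
proof -
  have "(\<lambda>n. c / real (Suc n)) \<longlonglongrightarrow> (0::real)"
    using LIMSEQ_Suc[OF lim_const_over_n[of c]] .
  thus ?thesis by (simp add: add.commute)
qed

lemma AA_low: assumes "j \<ge> 1" shows "1 < AA j * exp (1/(4*real j))"
proof -
  define L where "L n = AA (Suc n) * exp (1/(4*(real n+1)))" for n
  have step: "L (Suc n) < L n" for n
  proof -
    define y where "y = real (Suc n)"
    define x where "x = 1/(4*y*(y+1))"
    have y: "y \<ge> 1" unfolding y_def by simp
    have x: "x > 0" unfolding x_def using y by simp
    have "L (Suc n) = AA (Suc n) * (1+x) * exp(1/(4*(y+1)))"
      unfolding L_def x_def y_def using AA_Suc[of "Suc n"] by (simp add: add.commute)
    moreover have "L n = AA (Suc n) * (exp x * exp(1/(4*(y+1))))"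
    proof -
      have "1/(4*y) - 1/(4*(y+1)) = 1/(4*y*(y+1))" using y by (simp add: field_simps)
      hence "1/(4*y) = x + 1/(4*(y+1))" unfolding x_def by linarith
      hence "exp (1/(4*y)) = exp x * exp (1/(4*(y+1)))" by (simp add: exp_add)
      thus ?thesis unfolding L_def y_def by (simp add: add.commute)
    qed
    moreover have "1 + x < exp x"
      using ln_add_one_self_less_self[OF x] x by (metis add_pos_pos exp_less_cancel_iff exp_ln zero_less_one)
    moreover have "AA (Suc n) > 0" by (rule AA_pos) simp
    ultimately show ?thesis by simp
  qed
  have dec: "decseq L" by (rule decseq_SucI) (use step in \<open>simp add: less_imp_le\<close>)
  have lim: "L \<longlonglongrightarrow> 1"
  proof -
    have "(\<lambda>n. AA (Suc n) * exp (1/4 / (real n+1))) \<longlonglongrightarrow> 1 * exp 0"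
      by (intro tendsto_intros LIMSEQ_Suc[OF AA_lim] lim_c_over_Suc)
    thus ?thesis unfolding L_def by simp
  qed
  obtain n where n: "j = Suc n" using assms by (cases j) auto
  have "1 \<le> L (Suc n)" by (rule decseq_ge[OF dec lim])
  also have "\<dots> < L n" by (rule step)
  finally show ?thesis unfolding L_def n by (simp add: add.commute)
qed

definition gg :: "real \<Rightarrow> real" where "gg j = 1/(8*j) - 1/(192*j^3)"

lemma AA_up: assumes "j \<ge> 1" shows "AA j * exp (2 * gg (real j)) \<le> 1"
proof -
  define U where "U n = AA (Suc n) * exp (2 * gg (real n+1))" for n
  have step: "U n \<le> U (Suc n)" for n
  proof -
    define y where "y = real (Suc n)"
    define x where "x = 1/(4*y*(y+1))"
    have y: "y \<ge> 1" unfolding y_def by simp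
    have x: "x > 0" unfolding x_def using y by simp
    have "U (Suc n) = AA (Suc n) * ((1+x) * exp(2*gg (y+1)))"
      unfolding U_def x_def y_def using AA_Suc[of "Suc n"] by (simp add: add.commute)
    moreover have "U n = AA (Suc n) * exp (2 * gg y)" unfolding U_def y_def by (simp add: add.commute)
    moreover have "exp (2 * gg y) \<le> (1+x) * exp(2*gg (y+1))"
    proof -
      have "2 * gg y - 2 * gg (y+1) \<le> x - x^2/2" unfolding gg_def x_def using k1[OF y] by simp
      also have "\<dots> \<le> ln (1+x)" using ln_lower x by simp
      finally have "2 * gg y \<le> ln (1+x) + 2 * gg (y+1)" by simp
      hence "exp (2 * gg y) \<le> exp (ln (1+x) + 2 * gg (y+1))" by simp
      also have "\<dots> = (1+x) * exp(2*gg (y+1))" using x by (simp add: exp_add)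
      finally show ?thesis .
    qed
    moreover have "AA (Suc n) > 0" by (rule AA_pos) simp
    ultimately show ?thesis by simp
  qed
  have inc: "incseq U" by (rule incseq_SucI) (use step in simp)
  have lim: "U \<longlonglongrightarrow> 1"
  proof -
    have "(\<lambda>n. 1/(192*(real n+1)^3)) \<longlonglongrightarrow> (0::real)"
    proof -
      have "(\<lambda>n. (1/192/(real n+1)) * (1/(real n+1)) * (1/(real n+1))) \<longlonglongrightarrow> (0::real) * 0 * 0"
        by (intro tendsto_intros lim_c_over_Suc)
      thus ?thesis by (simp add: power3_eq_cube algebra_simps)
    qed
    hence "(\<lambda>n. AA (Suc n) * exp (2 * (1/8/(real n+1) - 1/(192*(real n+1)^3)))) \<longlonglongrightarrow> 1 * exp (2*(0 - 0))"
      by (intro tendsto_intros LIMSEQ_Suc[OF AA_lim] lim_c_over_Suc)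
    thus ?thesis unfolding U_def gg_def by simp
  qed
  obtain n where n: "j = Suc n" using assms by (cases j) auto
  have "U n \<le> 1" by (rule incseq_le[OF inc lim])
  thus ?thesis unfolding U_def n by (simp add: add.commute)
qed



definition BB :: "nat \<Rightarrow> real" where "BB j = sqrt (pi * j) * cb j"

lemma BB_sqrt: "BB j = sqrt (AA j)"
  unfolding BB_def AA_def using cb_pos[of j] by (simp add: real_sqrt_mult)

lemma BB_pos: "j \<ge> 1 \<Longrightarrow> BB j > 0"
  unfolding BB_def using cb_pos[of j] by simp

lemma BB_low: assumes "j \<ge> 1" shows "exp (-1/(8*real j)) < BB j"
proof -
  have e1: "exp (-1/(8*real j)) ^2 = exp (-1/(4*real j))"
    by (simp add: power2_eq_square exp_add[symmetric])
  have e2: "exp (-1/(4*real j)) = 1 / exp (1/(4*real j))"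
    by (simp add: exp_minus inverse_eq_divide)
  have "1 / exp (1/(4*real j)) < AA j"
    using AA_low[OF assms] by (simp add: divide_less_eq)
  hence "exp (-1/(8*real j)) ^2 < AA j" using e1 e2 by simp
  thus ?thesis unfolding BB_sqrt by (rule real_less_rsqrt)
qed

lemma BB_up: assumes "j \<ge> 1" shows "BB j \<le> exp (-23/(192*real j))"
proof -
  have j: "real j \<ge> 1" using assms by simp
  have e2: "exp (- gg (real j)) ^2 = 1 / exp (2 * gg (real j))"
    by (simp add: power2_eq_square exp_add[symmetric] exp_minus inverse_eq_divide)
  have "AA j \<le> 1 / exp (2 * gg (real j))"
    using AA_up[OF assms] by (simp add: le_divide_eq)
  hence "AA j \<le> exp (- gg (real j)) ^2" using e2 by simp
  hence "BB j \<le> exp (- gg (real j))" unfolding BB_sqrt by (rule real_le_lsqrt[rotated]) simp_all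
  also have "\<dots> \<le> exp (-23/(192*real j))"
  proof -
    have "1 \<le> real j ^2" by (rule one_le_power[OF j])
    hence "real j * 1 \<le> real j * real j^2" using j by (intro mult_left_mono) auto
    hence "real j \<le> real j ^3" by (simp add: power2_eq_square power3_eq_cube)
    hence "1/(192*real j^3) \<le> 1/(192*real j)"
      using j by (intro divide_left_mono) auto
    hence "23/(192*real j) \<le> gg (real j)" unfolding gg_def by simp
    thus ?thesis by simp
  qed
  finally show ?thesis .
qed


lemma choose_cb: "real ((2*j) choose j) = 4^j * cb j"
  unfolding cb_def by simp

lemma cb_BB: "j \<ge> 1 \<Longrightarrow> cb j = BB j / sqrt (pi * real j)"
  unfolding BB_def by simp

lemma T_eq: assumes "1 \<le> k" "k < R" shows
 "real((2*k) choose k) * real((2*(R-k)) choose (R-k)) / real((2*R) choose R)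
   = BB k * BB (R-k) / BB R * sqrt (real R/(pi*real k*(real R - real k)))"
proof -
  have p: "(4::real)^k * 4^(R-k) = 4^R" using assms by (simp add: power_add[symmetric])
  have "real((2*k) choose k) * real((2*(R-k)) choose (R-k)) / real((2*R) choose R)
      = (4^k * 4^(R-k)) * (cb k * cb (R-k)) / (4^R * cb R)"
    unfolding choose_cb by (simp add: mult_ac)
  also have "\<dots> = cb k * cb (R-k) / cb R" unfolding p by simp
  also have "\<dots> = (BB k / sqrt (pi * real k)) * (BB (R-k) / sqrt (pi * real (R-k))) / (BB R / sqrt (pi * real R))"
    using assms by (simp add: cb_BB)
  also have "\<dots> = BB k * BB (R-k) / BB R * (sqrt (pi * real R) / (sqrt (pi * real k) * sqrt (pi * real (R-k))))"
    by (simp add: field_simps)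
  also have "sqrt (pi * real R) / (sqrt (pi * real k) * sqrt (pi * real (R-k))) = sqrt (real R/(pi*real k*(real R - real k)))"
  proof -
    have "sqrt (pi * real R) / (sqrt (pi * real k) * sqrt (pi * real (R-k))) = sqrt ((pi * real R) / ((pi * real k) * (pi * real (R-k))))"
      by (simp add: real_sqrt_mult real_sqrt_divide)
    also have "(pi * real R) / ((pi * real k) * (pi * real (R-k))) = real R/(pi*real k*(real R - real k))"
      using assms by (simp add: of_nat_diff)
    finally show ?thesis .
  qed
  finally show ?thesis .
qed

lemma quot_low: "(a::real) < x \<Longrightarrow> b < y \<Longrightarrow> 0 < z \<Longrightarrow> z \<le> c \<Longrightarrow> 0 < a \<Longrightarrow> 0 < b \<Longrightarrow> a*b/c < x*y/z"
proof -
  assume h: "a < x" "b < y" "0 < z" "z \<le> c" "0 < a" "0 < b"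
  have "a*b/c \<le> a*b/z" using h by (intro divide_left_mono) auto
  also have "\<dots> < x*y/z" using h by (intro divide_strict_right_mono mult_strict_mono) auto
  finally show ?thesis .
qed

lemma quot_up: "(x::real) \<le> a \<Longrightarrow> y \<le> b \<Longrightarrow> c < z \<Longrightarrow> 0 < c \<Longrightarrow> 0 < x \<Longrightarrow> 0 < y \<Longrightarrow> x*y/z < a*b/c"
proof -
  assume h: "x \<le> a" "y \<le> b" "c < z" "0 < c" "0 < x" "0 < y"
  have "x*y/z < x*y/c" using h by (intro divide_strict_left_mono) auto
  also have "\<dots> \<le> a*b/c" using h by (intro divide_right_mono mult_mono) auto
  finally show ?thesis .
qed

lemma final_bounds:
  fixes k R :: nat and s0 s fk :: real
  assumes k1: "1 \<le> k" and kR: "k+1 \<le> R"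
  and s0: "s0^2 = real k*(real R - real k)/(2*real R)" "s0 > 0"
  and s: "s = sqrt(2*real R/(2*real R-1))* s0"
  and fk: "fk = real((2*k) choose k) * real((2*(R-k)) choose (R-k)) / real((2*R) choose R)"
  shows "fk > 1/(s0* sqrt(2*pi)) * exp(23/(192*real R) - 1/(16* s0^2)) \<and>
     1 / (s0 * sqrt (2 * pi)) * exp (23 / (192 * real R) - 1 / (16 * s0^2))
       > 1 / (s0 * sqrt (2 * pi)) * exp (- 1 / (16 * s0^2)) \<and>
     fk < 1 / (s0 * sqrt (2 * pi)) * exp (1 / (8 * real R) - 23 / (384 * s0^2)) \<and>
     1 / (s0 * sqrt (2 * pi)) * exp (1 / (8 * real R) - 23 / (384 * s0^2))
       < 1 / (s0 * sqrt (2 * pi)) * exp (- 1 / (24 * s0^2)) \<and>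
     1 / (s0 * sqrt (2 * pi)) * exp (- 1 / (24 * s0^2)) < 1 / (s * sqrt (2 * pi))"
proof -
  define K where "K = real k"
  define M where "M = real R - real k"
  have K: "K \<ge> 1" unfolding K_def using k1 by simp
  have M: "M \<ge> 1" unfolding M_def using kR by simp
  have RKM: "real R = K + M" unfolding K_def M_def by simp
  have MR: "real (R-k) = M" unfolding M_def using kR by (simp add: of_nat_diff)
  have s0K: "s0^2 = K*M/(2*(K+M))" using s0(1) unfolding K_def M_def by simp
  define C0 where "C0 = 1/(s0* sqrt(2*pi))"
  have C0pos: "C0 > 0" unfolding C0_def using s0(2) by simp
  have C0eq: "C0 = sqrt (real R/(pi*real k*(real R - real k)))"
  proof -
    have "s0 = sqrt (K*M/(2*(K+M)))" using s0K s0(2) by (metis abs_of_pos real_sqrt_abs)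
    hence "s0* sqrt(2*pi) = sqrt (K*M/(2*(K+M)) * (2*pi))" by (metis real_sqrt_mult)
    also have "K*M/(2*(K+M)) * (2*pi) = pi*K*M/(K+M)" using K M by (simp add: field_simps)
    finally have "C0 = 1/sqrt (pi*K*M/(K+M))" unfolding C0_def by simp
    also have "\<dots> = sqrt ((K+M)/(pi*K*M))" by (simp add: real_sqrt_divide)
    finally show ?thesis unfolding K_def M_def by simp
  qed
  define q where "q = BB k * BB (R-k) / BB R"
  have fkq: "fk = q * C0" unfolding fk q_def C0eq using T_eq[of k R] k1 kR by simp
  have e16: "1/(16* s0^2) = 1/(8*K) + 1/(8*M)" unfolding s0K using K M by (simp add: field_simps)
  have e384: "23/(384* s0^2) = 23/(192*K) + 23/(192*M)" unfolding s0K using K M by (simp add: field_simps)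
  have Rk1: "R - k \<ge> 1" "R \<ge> 1" using kR by auto
  have ql: "q > exp (23/(192*real R) - 1/(16* s0^2))"
  proof -
    have "exp (-1/(8*K)) * exp (-1/(8*M)) / exp (-23/(192*real R)) < BB k * BB (R-k) / BB R"
      using quot_low[OF BB_low[OF k1] BB_low[OF Rk1(1)] BB_pos[OF Rk1(2)] BB_up[OF Rk1(2)]]
      unfolding K_def MR by simp
    moreover have "exp (-1/(8*K)) * exp (-1/(8*M)) / exp (-23/(192*real R)) = exp (23/(192*real R) - 1/(16* s0^2))"
      unfolding e16 by (simp add: exp_add[symmetric] exp_diff[symmetric] algebra_simps)
    ultimately show ?thesis unfolding q_def by simp
  qed
  have qu: "q < exp (1/(8*real R) - 23/(384* s0^2))"
  proof -
    have "BB k * BB (R-k) / BB R < exp (-23/(192*K)) * exp (-23/(192*M)) / exp (-1/(8*real R))"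
      using quot_up[OF BB_up[OF k1] BB_up[OF Rk1(1)] BB_low[OF Rk1(2)] exp_gt_zero BB_pos[OF k1] BB_pos[OF Rk1(1)]]
      unfolding K_def MR by simp
    moreover have "exp (-23/(192*K)) * exp (-23/(192*M)) / exp (-1/(8*real R)) = exp (1/(8*real R) - 23/(384* s0^2))"
      unfolding e384 by (simp add: exp_add[symmetric] exp_diff[symmetric] algebra_simps)
    ultimately show ?thesis unfolding q_def by simp
  qed
  have g1: "fk > C0 * exp(23/(192*real R) - 1/(16* s0^2))"
    unfolding fkq using ql C0pos by (simp add: mult.commute)
  have g3: "fk < C0 * exp (1 / (8 * real R) - 23 / (384 * s0^2))"
    unfolding fkq using qu C0pos by (simp add: mult.commute)
  have g2: "C0 * exp (23 / (192 * real R) - 1 / (16 * s0^2)) > C0 * exp (- 1 / (16 * s0^2))"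
    using C0pos RKM K M by simp
  have s0R: "s0^2 \<le> real R / 8"
  proof -
    have "0 \<le> (K-M)^2" by simp
    hence "2*(K*M) \<le> K*K + M*M" by (simp add: power2_eq_square algebra_simps)
    thus ?thesis unfolding s0K RKM using K M by (simp add: field_simps)
  qed
  have s0p: "s0^2 > 0" using s0(2) by simp
  define t where "t = s0^2"
  have tp: "t > 0" unfolding t_def using s0p .
  have tR: "t \<le> real R / 8" unfolding t_def using s0R .
  have g4: "C0 * exp (1 / (8 * real R) - 23 / (384 * s0^2)) < C0 * exp (- 1 / (24 * s0^2))"
  proof -
    have R2: "real R \<ge> 2" using kR k1 by simp
    have a: "1 / (8 * real R) < 7 / (384 * t)"
      using tR tp R2 by (simp add: field_simps)
    have "23/(384*t) - 1/(24*t) = 7/(384*t)" using tp by (simp add: field_simps)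
    hence "1 / (8 * real R) - 23 / (384 * t) < - 1 / (24 * t)"
      using a by simp
    thus ?thesis using C0pos unfolding t_def by simp
  qed
  have g5: "C0 * exp (- 1 / (24 * s0^2)) < 1 / (s * sqrt (2 * pi))"
  proof -
    define Rr where "Rr = real R"
    have R2: "Rr \<ge> 2" unfolding Rr_def using kR k1 by simp
    have "1/(3*Rr) \<le> 1/(24*t)" using tR tp unfolding Rr_def by (intro divide_left_mono) auto
    hence "exp (- 1 / (24 * s0^2)) \<le> exp (-1/(3*Rr))" unfolding t_def by simp
    also have "exp (-1/(3*Rr)) = 1 / exp (1/(3*Rr))" by (simp add: exp_minus inverse_eq_divide)
    also have "\<dots> \<le> 1 / (1 + 1/(3*Rr))"
    proof -
      have "0 < 1 + 1/(3*Rr)" using R2 by (simp add: add_pos_pos)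
      thus ?thesis by (intro divide_left_mono) (auto intro!: mult_pos_pos)
    qed
    also have "1 / (1 + 1/(3*Rr)) = 3*Rr/(3*Rr+1)" using R2 by (simp add: field_simps)
    also have "\<dots> < sqrt ((2*Rr-1)/(2*Rr))"
    proof (rule real_less_rsqrt)
      have "(3*Rr)^2 * (2*Rr) < (2*Rr-1)*(3*Rr+1)^2"
      proof -
        have "2*Rr \<le> Rr*Rr" using mult_right_mono[OF R2, of Rr] R2 by simp
        hence "3*Rr^2 - 4*Rr - 1 > 0" using R2 unfolding power2_eq_square by linarith
        thus ?thesis by (simp add: power2_eq_square algebra_simps)
      qed
      thus "(3*Rr/(3*Rr+1))^2 < (2*Rr-1)/(2*Rr)" using R2 by (simp add: field_simps power_divide)
    qed
    also have "sqrt ((2*Rr-1)/(2*Rr)) = 1 / sqrt(2*Rr/(2*Rr-1))" by (simp add: real_sqrt_divide)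
    finally have "exp (- 1 / (24 * s0^2)) < 1 / sqrt(2*Rr/(2*Rr-1))" .
    hence "C0 * exp (- 1 / (24 * s0^2)) < C0 * (1 / sqrt(2*Rr/(2*Rr-1)))"
      using C0pos by (rule mult_strict_left_mono)
    moreover have "1 / (s * sqrt (2 * pi)) = C0 * (1 / sqrt(2*Rr/(2*Rr-1)))"
      unfolding s C0_def Rr_def by simp
    ultimately show ?thesis by simp
  qed
  show ?thesis using g1 g2 g3 g4 g5 unfolding C0_def by blast
qed


lemma V1_aux: "(\<Sum>k\<le>m. k * (a choose k) * (b choose (m - k))) =
   (if m = 0 then 0 else a * ((a - 1 + b) choose (m - 1)))"
proof (cases m)
  case 0 thus ?thesis by simp
next
  case (Suc m')
  have "(\<Sum>k\<le>m. k * (a choose k) * (b choose (m - k))) =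
        (\<Sum>i\<le>m'. Suc i * (a choose Suc i) * (b choose (m' - i)))"
    unfolding Suc sum.atMost_Suc_shift by simp
  also have "\<dots> = (\<Sum>i\<le>m'. a * (((a - 1) choose i) * (b choose (m' - i))))"
    by (intro sum.cong refl, subst binomial_absorption) (simp add: mult.assoc)
  also have "\<dots> = a * ((a - 1 + b) choose m')"
    by (simp add: sum_distrib_left[symmetric] vandermonde)
  finally show ?thesis using Suc by simp
qed

lemma V1: "(\<Sum>k\<le>m. k * (a choose k) * (b choose (m - k))) * (a + b) = a * m * ((a + b) choose m)"
proof (cases "m = 0 \<or> a = 0")
  case True thus ?thesis by (auto simp: V1_aux)
next
  case False
  then obtain m' a' where m: "m = Suc m'" and a: "a = Suc a'" by (metis not0_implies_Suc)
  have "(a + b) * ((a - 1 + b) choose (m - 1)) = m * ((a + b) choose m)"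
    using binomial_absorption[of m' "a+b"] m a by simp
  thus ?thesis unfolding V1_aux using m by (simp add: algebra_simps)
qed

lemma V2: "(\<Sum>k\<le>m. k * (k - 1) * (a choose k) * (b choose (m - k))) * ((a + b) * (a + b - 1))
     = a * (a - 1) * m * (m - 1) * ((a + b) choose m)"
proof (cases "m = 0 \<or> a = 0")
  case True thus ?thesis by auto
next
  case False
  then obtain m' a' where m: "m = Suc m'" and a: "a = Suc a'" by (metis not0_implies_Suc)
  have "(\<Sum>k\<le>m. k * (k - 1) * (a choose k) * (b choose (m - k))) =
        (\<Sum>i\<le>m'. i * (Suc i * (a choose Suc i)) * (b choose (m' - i)))"
    unfolding m sum.atMost_Suc_shift by (simp add: algebra_simps)
  also have "\<dots> = (\<Sum>i\<le>m'. a * (i * (a' choose i) * (b choose (m' - i))))"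
    by (intro sum.cong refl, subst binomial_absorption) (simp add: a algebra_simps)
  also have "\<dots> = a * (\<Sum>i\<le>m'. i * (a' choose i) * (b choose (m' - i)))"
    by (simp add: sum_distrib_left)
  finally have e: "(\<Sum>k\<le>m. k * (k - 1) * (a choose k) * (b choose (m - k))) = a * (\<Sum>i\<le>m'. i * (a' choose i) * (b choose (m' - i)))" .
  have v: "(\<Sum>i\<le>m'. i * (a' choose i) * (b choose (m' - i))) * (a' + b) = a' * m' * ((a' + b) choose m')"
    by (rule V1)
  have ab: "(a + b - 1) = a' + b" using a by simp
  have abs: "(a + b) * ((a' + b) choose m') = m * ((a + b) choose m)"
    using binomial_absorption[of m' "a+b"] m a by simp
  have "(\<Sum>k\<le>m. k * (k - 1) * (a choose k) * (b choose (m - k))) * ((a + b) * (a + b - 1))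
      = a * (a + b) * ((\<Sum>i\<le>m'. i * (a' choose i) * (b choose (m' - i))) * (a' + b))"
    unfolding e ab by (simp add: mult_ac)
  also have "\<dots> = a * a' * m' * ((a + b) * ((a' + b) choose m'))" unfolding v by (simp add: mult_ac)
  also have "\<dots> = a * (a - 1) * m * (m - 1) * ((a + b) choose m)" unfolding abs using a m by (simp add: algebra_simps)
  finally show ?thesis .
qed


lemma sum_int_nat: "(\<Sum>k\<in>{0..int m}. g k) = (\<Sum>k\<le>m. g (int k))"
proof -
  have e: "{0..int m} = int ` {..m}"
  proof
    show "{0..int m} \<subseteq> int ` {..m}"
    proof
      fix x assume "x \<in> {0..int m}"
      hence "x = int (nat x)" "nat x \<in> {..m}" by auto
      thus "x \<in> int ` {..m}" by blast
    qed
  qed auto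
  show ?thesis unfolding e by (subst sum.reindex) (auto simp: inj_on_def)
qed

lemma pmf_nat: "k \<le> m \<Longrightarrow> hyp_pmf m a b (int k) = real (a choose k) * real (b choose (m-k)) / real ((a+b) choose m)"
proof -
  assume k: "k \<le> m"
  have "nat (int m - int k) = m - k" using k by simp
  thus ?thesis unfolding hyp_pmf_def zbinom_def using k by simp
qed

lemma real_k_km1: "real (k*(k-1)) = real k * (real k - 1)"
  by (cases k) (auto simp: algebra_simps)

lemma real_k_km1_xy: "real (k*(k-1)*x*y) = real k * (real k - 1) * real x * real y"
  by (simp only: of_nat_mult[of "k*(k-1)" x] of_nat_mult[of "k*(k-1)*x" y] real_k_km1)

definition PP :: "nat \<Rightarrow> nat \<Rightarrow> nat \<Rightarrow> nat \<Rightarrow> real" where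
  "PP m a b k = real (a choose k) * real (b choose (m-k)) / real ((a+b) choose m)"

lemma S0: "m \<le> a + b \<Longrightarrow> (\<Sum>k\<le>m. PP m a b k) = 1"
proof -
  assume h: "m \<le> a + b"
  have "(\<Sum>k\<le>m. PP m a b k) = real (\<Sum>k\<le>m. (a choose k) * (b choose (m-k))) / real ((a+b) choose m)"
    unfolding PP_def by (simp add: sum_divide_distrib)
  also have "\<dots> = 1" using h by (simp add: vandermonde)
  finally show ?thesis .
qed

lemma mean_sum: "hyp_mean m a b = (\<Sum>k\<le>m. real k * PP m a b k)"
  unfolding hyp_mean_def sum_int_nat PP_def by (intro sum.cong refl) (simp add: pmf_nat)

lemma S1: "m \<le> a + b \<Longrightarrow> hyp_mean m a b * real (a + b) = real a * real m"
proof -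
  assume h: "m \<le> a + b"
  have D: "real ((a+b) choose m) > 0" using h by simp
  have "hyp_mean m a b = real (\<Sum>k\<le>m. k * (a choose k) * (b choose (m-k))) / real ((a+b) choose m)"
    unfolding mean_sum PP_def by (simp add: sum_divide_distrib mult.assoc)
  hence "hyp_mean m a b * real (a + b) = real ((\<Sum>k\<le>m. k * (a choose k) * (b choose (m-k))) * (a+b)) / real ((a+b) choose m)"
    by simp
  also have "\<dots> = real a * real m" unfolding V1 using D by simp
  finally show ?thesis .
qed

definition E2 :: "nat \<Rightarrow> nat \<Rightarrow> nat \<Rightarrow> real" where
  "E2 m a b = (\<Sum>k\<le>m. real k * (real k - 1) * PP m a b k)"

lemma S2: "m \<le> a + b \<Longrightarrow> E2 m a b * (real (a + b) * (real (a+b) - 1)) = real a * (real a - 1) * real m * (real m - 1)"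
proof -
  assume h: "m \<le> a + b"
  have D: "real ((a+b) choose m) > 0" using h by simp
  have "E2 m a b = real (\<Sum>k\<le>m. k * (k-1) * (a choose k) * (b choose (m-k))) / real ((a+b) choose m)"
    unfolding E2_def PP_def sum_divide_distrib of_nat_sum
    by (intro sum.cong refl) (simp only: real_k_km1_xy, simp add: mult.assoc)
  hence "E2 m a b * real ((a + b) * (a+b-1)) = real ((\<Sum>k\<le>m. k * (k-1) * (a choose k) * (b choose (m-k))) * ((a+b)*(a+b-1))) / real ((a+b) choose m)"
    by simp
  also have "\<dots> = real (a * (a - 1) * m * (m - 1))" unfolding V2 using D by simp
  finally have X: "E2 m a b * real ((a + b) * (a+b-1)) = real (a * (a - 1) * m * (m - 1))" .
  have h1: "real ((a + b) * (a+b-1)) = real (a+b) * (real (a+b) - 1)" by (rule real_k_km1)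
  have "a*(a-1)*m*(m-1) = (a*(a-1))*(m*(m-1))" by (metis mult.assoc)
  hence h2: "real (a*(a-1)*m*(m-1)) = real a*(real a-1)*(real m*(real m-1))"
    by (simp only: of_nat_mult[of "a*(a-1)" "m*(m-1)"] real_k_km1)
  show ?thesis using X unfolding h1 h2 by (simp add: mult.assoc)
qed

lemma var_E: "m \<le> a + b \<Longrightarrow> hyp_var m a b = E2 m a b + hyp_mean m a b - (hyp_mean m a b)^2"
proof -
  assume h: "m \<le> a + b"
  define mu where "mu = hyp_mean m a b"
  have "hyp_var m a b = (\<Sum>k\<le>m. (real k - mu)^2 * PP m a b k)"
    unfolding hyp_var_def sum_int_nat PP_def mu_def by (intro sum.cong refl) (simp add: pmf_nat)
  also have "\<dots> = (\<Sum>k\<le>m. real k * (real k - 1) * PP m a b k + (1 - 2*mu) * (real k * PP m a b k) + mu^2 * PP m a b k)"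
    by (intro sum.cong refl) (simp add: power2_eq_square algebra_simps)
  also have "\<dots> = E2 m a b + (1 - 2*mu) * mu + mu^2 * 1"
    unfolding sum.distrib E2_def sum_distrib_left[symmetric] mean_sum[symmetric] mu_def S0[OF h] ..
  finally show ?thesis unfolding mu_def by (simp add: power2_eq_square algebra_simps)
qed


lemma var_closed: assumes h: "m \<le> a + b" and N2: "a + b \<ge> 2"
  shows "hyp_var m a b = real a * real b * real m * (real (a+b) - real m) / (real (a+b)^2 * (real (a+b) - 1))"
proof -
  define x where "x = real a" define y where "y = real b" define z where "z = real m"
  define mu where "mu = hyp_mean m a b" define e where "e = E2 m a b"
  have N: "real (a+b) = x + y" unfolding x_def y_def by simp
  have N1: "x + y > 1" using N2 unfolding x_def y_def by simp
  have m1: "mu * (x+y) = x*z" using S1[OF h] unfolding mu_def x_def y_def z_def by simp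
  have e1: "e * ((x+y)*((x+y)-1)) = x*(x-1)*z*(z-1)" using S2[OF h] unfolding e_def x_def y_def z_def by simp
  have v: "hyp_var m a b = e + mu - mu^2" using var_E[OF h] unfolding e_def mu_def .
  have "hyp_var m a b * ((x+y)^2*((x+y)-1)) = (e * ((x+y)*((x+y)-1))) * (x+y) + (mu*(x+y))*((x+y)*((x+y)-1)) - (mu*(x+y))^2*((x+y)-1)"
    unfolding v by (simp add: power2_eq_square algebra_simps)
  also have "\<dots> = x*y*z*((x+y)-z)" unfolding e1 m1 by (simp add: power2_eq_square algebra_simps)
  finally have eq: "hyp_var m a b * ((x+y)^2*((x+y)-1)) = x*y*z*((x+y)-z)" .
  have D0: "(x+y)^2*((x+y)-1) \<noteq> 0" using N1 by simp
  show ?thesis unfolding N x_def[symmetric] y_def[symmetric] z_def[symmetric]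
    by (subst nonzero_eq_divide_eq[OF D0]) (rule eq)
qed

lemma var_small: assumes h: "m \<le> a + b" and N1: "a + b \<le> 1" shows "hyp_var m a b = 0"
proof -
  have e: "E2 m a b = 0" unfolding E2_def
  proof (intro sum.neutral ballI)
    fix k assume "k \<in> {..m}"
    hence "k = 0 \<or> k = 1" using h N1 by auto
    thus "real k * (real k - 1) * PP m a b k = 0" by auto
  qed
  have "hyp_mean m a b - (hyp_mean m a b)^2 = 0"
  proof (cases "a + b = 0")
    case True
    hence "m = 0" using h by simp
    thus ?thesis unfolding mean_sum by simp
  next
    case False
    hence N: "a + b = 1" using N1 by linarith
    hence "hyp_mean m a b = real a * real m" using S1[OF h] by simp
    moreover have "a \<le> 1" "m \<le> 1" using N h by auto
    ultimately show ?thesis by (cases a; cases m) (auto simp: power2_eq_square)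
  qed
  thus ?thesis using var_E[OF h] e by simp
qed

lemma var_pos_struct: assumes h: "m \<le> a + b" and v: "hyp_var m a b > 0"
  shows "a + b \<ge> 2 \<and> a \<ge> 1 \<and> b \<ge> 1 \<and> m \<ge> 1 \<and> m < a + b"
proof -
  have N2: "a + b \<ge> 2" using var_small[OF h] v by (cases "a + b \<le> 1") auto
  have nz: "real a * real b * real m * (real (a+b) - real m) \<noteq> 0"
  proof
    assume "real a * real b * real m * (real (a+b) - real m) = 0"
    hence "hyp_var m a b = 0" unfolding var_closed[OF h N2] by simp
    thus False using v by simp
  qed
  have "a \<noteq> 0" using nz by auto
  moreover have "b \<noteq> 0" using nz by auto
  moreover have "m \<noteq> 0" using nz by auto
  moreover have "m \<noteq> a + b" using nz by auto
  ultimately show ?thesis using N2 h by auto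
qed

lemma pmf_nonneg: "hyp_pmf m a b j \<ge> 0"
  unfolding hyp_pmf_def zbinom_def by simp

lemma zbinom_pos: "zbinom a j > 0 \<longleftrightarrow> 0 \<le> j \<and> j \<le> int a"
  unfolding zbinom_def by auto

lemma pmf_pos_iff: assumes "m \<le> a + b"
  shows "hyp_pmf m a b j > 0 \<longleftrightarrow> (0 \<le> j \<and> j \<le> int a \<and> 0 \<le> int m - j \<and> int m - j \<le> int b)"
proof -
  have D: "real ((a+b) choose m) > 0" using assms by simp
  have nn: "zbinom a j \<ge> 0" "zbinom b (int m - j) \<ge> 0" unfolding zbinom_def by auto
  have "hyp_pmf m a b j > 0 \<longleftrightarrow> zbinom a j * zbinom b (int m - j) > 0"
    unfolding hyp_pmf_def using D by (simp add: zero_less_divide_iff)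
  also have "\<dots> \<longleftrightarrow> zbinom a j > 0 \<and> zbinom b (int m - j) > 0"
    using nn by (auto simp: zero_less_mult_iff)
  finally have "hyp_pmf m a b j > 0 \<longleftrightarrow> zbinom a j > 0 \<and> zbinom b (int m - j) > 0" .
  thus ?thesis unfolding zbinom_pos by auto
qed


lemma choose_sym_id: assumes "k \<le> R"
  shows "real (R choose k) * real (R choose (2*k - k)) / real ((2*R) choose (2*k))
       = real ((2*k) choose k) * real ((2*(R-k)) choose (R-k)) / real ((2*R) choose R)"
proof -
  have e1: "2*k - k = k" "2*R - R = R" "2*(R-k) - (R-k) = R - k" "2*R - 2*k = 2*(R-k)" using assms by auto
  define A where "A = (fact R :: real)" define B where "B = (fact k :: real)"
  define C where "C = (fact (R-k) :: real)" define D where "D = (fact (2*k) :: real)"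
  define E where "E = (fact (2*(R-k)) :: real)" define F where "F = (fact (2*R) :: real)"
  have nz: "A \<noteq> 0" "B \<noteq> 0" "C \<noteq> 0" "D \<noteq> 0" "E \<noteq> 0" "F \<noteq> 0"
    unfolding A_def B_def C_def D_def E_def F_def by simp_all
  have h1: "real (R choose k) = A/(B*C)" unfolding A_def B_def C_def using binomial_fact[OF assms] by simp
  have h2: "real ((2*R) choose (2*k)) = F/(D*E)" unfolding F_def D_def E_def
    using binomial_fact[of "2*k" "2*R"] assms e1 by simp
  have h3: "real ((2*k) choose k) = D/(B*B)" unfolding D_def B_def
    using binomial_fact[of k "2*k"] e1 by simp
  have h4: "real ((2*(R-k)) choose (R-k)) = E/(C*C)" unfolding E_def C_def
    using binomial_fact[of "R-k" "2*(R-k)"] e1 by simp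
  have h5: "real ((2*R) choose R) = F/(A*A)" unfolding F_def A_def
    using binomial_fact[of R "2*R"] e1 by simp
  show ?thesis unfolding e1(1) h1 h2 h3 h4 h5 using nz by (simp add: field_simps)
qed


lemma cls: fixes a b m :: int
  assumes "a \<ge> 1" "b \<ge> 1" "m \<ge> 1" "m < a + b" "n*(a+b) = 2*a*m" "n = max 0 (m - b) + min m a"
  shows "a = b \<or> a + b = 2*m"
proof (cases "m \<le> b")
  case True
  show ?thesis
  proof (cases "m \<le> a")
    case True
    hence "n = m" using assms \<open>m \<le> b\<close> by simp
    hence "m*(a+b) = m*(2*a)" using assms(5) by (simp add: algebra_simps)
    hence "a + b = 2*a" using assms(3) by simp
    thus ?thesis by simp
  next
    case False
    hence "n = a" using assms \<open>m \<le> b\<close> by simp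
    hence "a*(a+b) = a*(2*m)" using assms(5) by (simp add: algebra_simps)
    hence "a + b = 2*m" using assms(1) by simp
    thus ?thesis by simp
  qed
next
  case False
  show ?thesis
  proof (cases "m \<le> a")
    case True
    hence "n = 2*m - b" using assms False by simp
    hence h: "(2*m-b)*(a+b) = 2*a*m" using assms(5) by simp
    have "b*(2*m - a - b) = (2*m-b)*(a+b) - 2*a*m" by (simp add: algebra_simps)
    hence "b*(2*m - a - b) = 0" using h by simp
    hence "a + b = 2*m" using assms(2) by simp
    thus ?thesis by simp
  next
    case F2: False
    hence "n = m - b + a" using assms False by simp
    hence h: "(m - b + a)*(a+b) = 2*a*m" using assms(5) by simp
    have "(a - b)*(a + b - m) = (m - b + a)*(a+b) - 2*a*m" by (simp add: algebra_simps)
    hence "(a - b)*(a + b - m) = 0" using h by simp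
    thus ?thesis using assms(4) by simp
  qed
qed

theorem lemma4p3:
  fixes m rd bl :: nat and n :: int
  defines "N \<equiv> rd + bl"
  defines "f \<equiv> hyp_pmf m rd bl"
  defines "\<sigma> \<equiv> sqrt (hyp_var m rd bl)"
  defines "\<sigma>0 \<equiv> sqrt ((real N - 1) / real N * \<sigma>^2)"
  defines "r \<equiv> real N / 2"
  assumes hm: "m \<le> N"
    and mean: "hyp_mean m rd bl = real_of_int n / 2"
    and symm: "\<forall>j::int. f j = f (n - j)"
    and sigpos: "\<sigma> > 0"
    and neven: "even n"
  shows "let k = n div 2 in
     n = 2 * k \<and> 1 \<le> k \<and> real_of_int k \<le> r - 1 \<and> r \<ge> 2 \<and>
     1/4 \<le> \<sigma>0^2 \<and> \<sigma>0^2 = real_of_int k * (r - real_of_int k) / (2 * r) \<and> \<sigma>0^2 \<le> r / 8 \<and>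
     \<sigma> = sqrt (2 * r / (2 * r - 1)) * \<sigma>0 \<and>
     f k > 1 / (\<sigma>0 * sqrt (2 * pi)) * exp (23 / (192 * r) - 1 / (16 * \<sigma>0^2)) \<and>
     1 / (\<sigma>0 * sqrt (2 * pi)) * exp (23 / (192 * r) - 1 / (16 * \<sigma>0^2))
       > 1 / (\<sigma>0 * sqrt (2 * pi)) * exp (- 1 / (16 * \<sigma>0^2)) \<and>
     f k < 1 / (\<sigma>0 * sqrt (2 * pi)) * exp (1 / (8 * r) - 23 / (384 * \<sigma>0^2)) \<and>
     1 / (\<sigma>0 * sqrt (2 * pi)) * exp (1 / (8 * r) - 23 / (384 * \<sigma>0^2))
       < 1 / (\<sigma>0 * sqrt (2 * pi)) * exp (- 1 / (24 * \<sigma>0^2)) \<and>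
     1 / (\<sigma>0 * sqrt (2 * pi)) * exp (- 1 / (24 * \<sigma>0^2)) < 1 / (\<sigma> * sqrt (2 * pi))"
proof -
  have hm': "m \<le> rd + bl" using hm unfolding N_def .
  have varpos: "hyp_var m rd bl > 0" using sigpos unfolding \<sigma>_def by simp
  have st: "rd + bl \<ge> 2 \<and> rd \<ge> 1 \<and> bl \<ge> 1 \<and> m \<ge> 1 \<and> m < rd + bl"
    using var_pos_struct[OF hm' varpos] .
  have N2: "rd + bl \<ge> 2" using st by simp
  have "real_of_int n / 2 * real (rd + bl) = real rd * real m" using S1[OF hm'] mean by simp
  hence "real_of_int (n * int (rd + bl)) = real_of_int (2 * int rd * int m)" by simp
  hence nN: "n * (int rd + int bl) = 2 * int rd * int m" by (simp only: of_int_eq_iff) simp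
  define lo where "lo = max 0 (int m - int bl)"
  define hi where "hi = min (int m) (int rd)"
  have flo: "f lo > 0" unfolding f_def lo_def using pmf_pos_iff[OF hm'] hm' by auto
  have fhi: "f hi > 0" unfolding f_def hi_def using pmf_pos_iff[OF hm'] hm' by auto
  have "f (n - lo) > 0" using flo symm[rule_format, of lo] by simp
  hence a1: "n - lo \<le> hi" unfolding f_def hi_def using pmf_pos_iff[OF hm'] by auto
  have "f (n - hi) > 0" using fhi symm[rule_format, of hi] by simp
  hence a2: "lo \<le> n - hi" unfolding f_def lo_def using pmf_pos_iff[OF hm'] by auto
  have nlh: "n = max 0 (int m - int bl) + min (int m) (int rd)" using a1 a2 unfolding lo_def hi_def by linarith
  have cl: "int rd = int bl \<or> int rd + int bl = 2 * int m"
    by (rule cls[of "int rd" "int bl" "int m" n]) (use st nN nlh in auto)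
  obtain kk R :: nat where red: "n = 2 * int kk" "1 \<le> kk" "kk + 1 \<le> R" "N = 2 * R"
    "f (int kk) = real((2*kk) choose kk) * real((2*(R-kk)) choose (R-kk)) / real((2*R) choose R)"
    "hyp_var m rd bl = real kk * (real R - real kk) / (2 * real R - 1)"
  proof -
    obtain kk where nk: "n = 2 * int kk"
    proof -
      obtain q where q: "n = 2 * q" using neven by blast
      moreover have "q \<ge> 0"
      proof -
        have "2 * int rd * int m > 0" using st by simp
        hence "n * (int rd + int bl) > 0" using nN by simp
        moreover have "int rd + int bl > 0" using st by simp
        ultimately have "n > 0" by (simp add: zero_less_mult_iff)
        thus ?thesis using q by simp
      qed
      ultimately show ?thesis using that[of "nat q"] by simp
    qed
    from cl show ?thesis
    proof
      assume "int rd = int bl"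
      hence rb: "rd = bl" by simp
      have "n = int m" using nN rb st by (simp add: algebra_simps)
      hence m2: "m = 2 * kk" using nk by simp
      have vc: "hyp_var m rd bl = real rd * real bl * real m * (real (rd+bl) - real m) / (real (rd+bl)^2 * (real (rd+bl) - 1))"
        using var_closed[OF hm' N2] .
      show ?thesis
      proof (rule that[of kk rd])
        show "n = 2 * int kk" by (rule nk)
        show "1 \<le> kk" using st m2 by simp
        show "kk + 1 \<le> rd" using st m2 rb by simp
        show "N = 2 * rd" unfolding N_def rb by simp
        have "f (int kk) = real (rd choose kk) * real (rd choose (2*kk - kk)) / real ((2*rd) choose (2*kk))"
          unfolding f_def using pmf_nat[of kk m rd bl] m2 rb by (simp add: mult_2)
        also have "\<dots> = real((2*kk) choose kk) * real((2*(rd-kk)) choose (rd-kk)) / real((2*rd) choose rd)"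
          by (rule choose_sym_id) (use st m2 rb in simp)
        finally show "f (int kk) = real((2*kk) choose kk) * real((2*(rd-kk)) choose (rd-kk)) / real((2*rd) choose rd)" .
        have kr: "kk \<le> rd" using st m2 rb by simp
        have "hyp_var m rd bl = real rd * real rd * (2*real kk) * (2*real rd - 2*real kk) / ((2*real rd)^2 * (2*real rd - 1))"
        proof -
          have e1: "real m = 2*real kk" "real bl = real rd" "real (rd+bl) = 2*real rd" using m2 rb by simp_all
          show ?thesis by (simp only: vc e1)
        qed
        also have "\<dots> = real kk * (real rd - real kk) / (2 * real rd - 1)"
        proof -
          have "real rd \<ge> 1" using st by simp
          thus ?thesis by (simp add: field_simps power2_eq_square)
        qed
        finally show "hyp_var m rd bl = real kk * (real rd - real kk) / (2 * real rd - 1)" .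
      qed
    next
      assume hN: "int rd + int bl = 2 * int m"
      hence Nm: "rd + bl = 2 * m" by simp
      have "n * (2 * int m) = 2 * int rd * int m" using nN hN by simp
      hence "n * (2 * int m) = int rd * (2 * int m)" by (simp add: mult_ac)
      moreover have "2 * int m \<noteq> 0" using st by simp
      ultimately have "n = int rd" by (rule mult_right_cancel[THEN iffD1, rotated])
      hence r2: "rd = 2 * kk" using nk by simp
      have b2: "bl = 2 * (m - kk)" using Nm r2 by simp
      have vc: "hyp_var m rd bl = real rd * real bl * real m * (real (rd+bl) - real m) / (real (rd+bl)^2 * (real (rd+bl) - 1))"
        using var_closed[OF hm' N2] .
      show ?thesis
      proof (rule that[of kk m])
        show "n = 2 * int kk" by (rule nk)
        show "1 \<le> kk" using st r2 by simp
        show "kk + 1 \<le> m" using st r2 Nm by simp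
        show "N = 2 * m" unfolding N_def Nm by simp
        have kr: "kk \<le> m" using st r2 Nm by simp
        show "f (int kk) = real((2*kk) choose kk) * real((2*(m-kk)) choose (m-kk)) / real((2*m) choose m)"
          unfolding f_def using pmf_nat[of kk m rd bl] kr r2 b2 Nm by simp
        have "hyp_var m rd bl = (2*real kk) * (2*(real m - real kk)) * real m * (2*real m - real m) / ((2*real m)^2 * (2*real m - 1))"
        proof -
          have e1: "real rd = 2*real kk" "real bl = 2*(real m - real kk)" "real (rd+bl) = 2*real m"
            using r2 b2 Nm kr by (simp_all add: of_nat_diff)
          show ?thesis by (simp only: vc e1)
        qed
        also have "\<dots> = real kk * (real m - real kk) / (2 * real m - 1)"
        proof -
          have "real m \<ge> 1" using st by simp
          thus ?thesis by (simp add: field_simps power2_eq_square)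
        qed
        finally show "hyp_var m rd bl = real kk * (real m - real kk) / (2 * real m - 1)" .
      qed
    qed
  qed
  have kdef: "n div 2 = int kk" using red(1) by simp
  have rR: "r = real R" unfolding r_def red(4) by simp
  have K: "real kk \<ge> 1" and M: "real R - real kk \<ge> 1" using red(2,3) by auto
  have R2: "real R \<ge> 2" using K M by simp
  have var_nn: "hyp_var m rd bl \<ge> 0" using varpos by simp
  have sig2: "\<sigma>^2 = real kk * (real R - real kk) / (2 * real R - 1)"
    unfolding \<sigma>_def using var_nn red(6) by simp
  have s0arg: "(real N - 1) / real N * \<sigma>^2 = real kk * (real R - real kk) / (2 * real R)"
    unfolding sig2 red(4) using R2 by (simp add: field_simps)
  have s0sq: "\<sigma>0^2 = real kk * (real R - real kk) / (2 * real R)"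
    unfolding \<sigma>0_def s0arg using K M R2 by simp
  have s0pos: "\<sigma>0 > 0" unfolding \<sigma>0_def s0arg using K M R2 by simp
  have s0low: "1/4 \<le> \<sigma>0^2"
  proof -
    have "real kk * 1 \<le> real kk * (real R - real kk)" by (rule mult_left_mono) (use K M in auto)
    hence h1: "real kk \<le> real kk * (real R - real kk)" by simp
    have "1 * (real R - real kk) \<le> real kk * (real R - real kk)" by (rule mult_right_mono) (use K M in auto)
    hence h2: "real R - real kk \<le> real kk * (real R - real kk)" by simp
    have "2 * real R \<le> 4 * (real kk * (real R - real kk))" using h1 h2 by linarith
    thus ?thesis unfolding s0sq using R2 by (simp add: field_simps)
  qed
  have s0up: "\<sigma>0^2 \<le> real R / 8"
  proof -
    have "0 \<le> (real kk - (real R - real kk))^2" by simp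
    hence "4 * (real kk * (real R - real kk)) \<le> real R * real R" by (simp add: power2_eq_square algebra_simps)
    thus ?thesis unfolding s0sq using R2 by (simp add: field_simps)
  qed
  have sig_eq: "\<sigma> = sqrt (2 * real R / (2 * real R - 1)) * \<sigma>0"
  proof -
    have sg: "\<sigma> \<ge> 0" using sigpos by simp
    have "\<sigma>0 = sqrt ((2*real R - 1) / (2*real R) * \<sigma>^2)"
      unfolding \<sigma>0_def red(4) by simp
    also have "\<dots> = sqrt ((2*real R - 1) / (2*real R)) * sqrt (\<sigma>^2)" by (rule real_sqrt_mult)
    also have "sqrt (\<sigma>^2) = \<sigma>" using sg by simp
    finally have "\<sigma>0 = sqrt ((2*real R - 1) / (2*real R)) * \<sigma>" .
    hence "sqrt (2 * real R / (2 * real R - 1)) * \<sigma>0 = (sqrt (2 * real R / (2 * real R - 1)) * sqrt ((2*real R - 1) / (2*real R))) * \<sigma>"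
      by simp
    also have "sqrt (2 * real R / (2 * real R - 1)) * sqrt ((2*real R - 1) / (2*real R)) = 1"
      using R2 by (simp add: real_sqrt_mult[symmetric])
    finally show ?thesis by simp
  qed
  note fb = final_bounds[OF red(2) red(3) s0sq s0pos sig_eq red(5)]
  show ?thesis unfolding Let_def kdef rR
    using red(1,2,3) R2 s0low s0sq s0up sig_eq fb by simp
qed


end
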